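(* In the Schwarzschild spacetime of mass $m>0$ written in ingoing Eddington--Finkelstein coordinates $(v,r,\omega)\in\mathbb R\times(0,\infty)\times S^2$, $\mathfrak g=-(1-\frac{2m}r)dv^2+2dv\,dr+r^2d\omega^2$, there exists a smooth one-parameter family of spacelike hypersurfaces $\{\Sigma_T\}_{T\in\mathbb R}$ such that: (i) the $\Sigma_T$ form a smooth foliation of the region $r>0$; equivalently $(T,r,\omega)$ is a smooth horizon-penetrating coordinate system with $\Sigma_T=\{T=\mathrm{const}\}$; (ii) each $\Sigma_T$ meets the future horizon $\mathcal H^+=\{r=2m\}$ in a round sphere $S_T=\Sigma_T\cap\mathcal H^+$, the family $\{S_T\}_{T\in\mathbb R}$ foliates $\mathcal H^+$, and each $S_T$ is a MOTS; (iii) there is a smooth function $r_{\mathrm{cut}}(T)=2m+2\delta_0e^{-T/(4m)}$, for some fixed constant $\delta_0>0$, so that $r_{\mathrm{cut}}(T)\downarrow2m$ as $T\to+\infty$ and $\Sigma_T\cap\{r\ge r_{\mathrm{cut}}(T)\}=\{t_{\mathrm{Sch}}=T\}\cap\{r\ge r_{\mathrm{cut}}(T)\}$; in particular $\Sigma_T$ is tangentially maximal on $r\ge r_{\mathrm{cut}}(T)$.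
   Context: On $r>2m$, the Schwarzschild time is $t_{\mathrm{Sch}}=v-r_*(r)$ with $r_*(r)=r+2m\log(\frac r{2m}-1)$. A MOTS is a closed spacelike surface whose future outgoing null expansion vanishes. A spacelike hypersurface foliated by closed spacelike surfaces (here the spheres $r=\mathrm{const}$) is tangentially maximal (on a region) if the trace over each leaf of its second fundamental form vanishes, equivalently the spacetime mean curvature vector of each leaf is tangent to the hypersurface. *)

theory Defs
  imports "HOL-Analysis.Analysis"
begin

text \<open>A function is smooth iff it is differentiable at every point of U
  with partial derivatives f1, f2 which are themselves smooth (greatest fixed point,
  i.e. all iterated partial derivatives exist).\<close>
coinductive smooth2 :: "(real \<times> real) set \<Rightarrow> (real \<times> real \<Rightarrow> real) \<Rightarrow> bool"
  for U :: "(real \<times> real) set" where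
  "(\<forall>z\<in>U. (f has_derivative (\<lambda>h. fst h * f1 z + snd h * f2 z)) (at z))
    \<Longrightarrow> smooth2 U f1 \<Longrightarrow> smooth2 U f2 \<Longrightarrow> smooth2 U f"

text \<open>Ingoing Eddington--Finkelstein chart: coordinates (v,r) with r>0 (the sphere factor
  is suppressed; all hypersurfaces considered are spherically symmetric graphs
  v = V T r over r \<in> (0,\<infinity>)).\<close>
definition EF_region :: "(real \<times> real) set" where
  "EF_region = UNIV \<times> {0<..}"

definition lapse :: "real \<Rightarrow> real \<Rightarrow> real" where
  "lapse m r = 1 - 2 * m / r"

text \<open>Tortoise coordinate r_* on r>2m and Schwarzschild time t = v - r_*(r).\<close>
definition rstar :: "real \<Rightarrow> real \<Rightarrow> real" where
  "rstar m r = r + 2 * m * ln (r / (2 * m) - 1)"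

definition t_Sch :: "real \<Rightarrow> real \<Rightarrow> real \<Rightarrow> real" where
  "t_Sch m v r = v - rstar m r"

text \<open>The hypersurface {v = V T r} is spacelike at radius r: the induced metric
  g(X,X) for X = V_r d/dv + d/dr, namely 2 V_r - (1-2m/r) V_r^2, is positive
  (the angular part r^2 d\<omega>^2 is positive for r>0).\<close>
definition spacelike_graph :: "real \<Rightarrow> (real \<Rightarrow> real) \<Rightarrow> real \<Rightarrow> bool" where
  "spacelike_graph m W r \<longleftrightarrow>
     (let Wr = deriv W r in 2 * Wr - lapse m r * Wr^2 > 0)"

text \<open>Future outgoing null expansion of the round sphere {v = v0, r = r0}:
  with future outgoing null normal l = d/dv + (1/2)(1-2m/r) d/dr,
  theta_+ = (2/r) l(r) = (1/r0)(1 - 2m/r0).\<close>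
definition outgoing_expansion :: "real \<Rightarrow> real \<Rightarrow> real" where
  "outgoing_expansion m r0 = (1 / r0) * lapse m r0"

definition is_MOTS_sphere :: "real \<Rightarrow> real \<Rightarrow> bool" where
  "is_MOTS_sphere m r0 \<longleftrightarrow> outgoing_expansion m r0 = 0"

text \<open>Tangential maximality of the graph {v = W r} at radius r: the mean curvature
  vector of the leaf sphere, -(2/r) grad r with grad r = d/dv + (1-2m/r) d/dr, is tangent
  to the hypersurface, whose radial tangent is W' d/dv + d/dr; i.e.
  1 - (1-2m/r) W'(r) = 0.\<close>
definition tangentially_maximal_at :: "real \<Rightarrow> (real \<Rightarrow> real) \<Rightarrow> real \<Rightarrow> bool" where
  "tangentially_maximal_at m W r \<longleftrightarrow> lapse m r * deriv W r = 1"

end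

theory Submission
  imports Defs "HOL-Computational_Algebra.Polynomial"
begin


coinductive smooth1 :: "real set \<Rightarrow> (real \<Rightarrow> real) \<Rightarrow> bool" for S :: "real set" where
  "(\<forall>x\<in>S. (f has_real_derivative f' x) (at x)) \<Longrightarrow> smooth1 S f' \<Longrightarrow> smooth1 S f"

inductive gen2 :: "(real \<times> real) set \<Rightarrow> (real \<times> real \<Rightarrow> real) \<Rightarrow> bool" for U where
  base: "smooth2 U f \<Longrightarrow> gen2 U f"
| add: "gen2 U f \<Longrightarrow> gen2 U g \<Longrightarrow> gen2 U (\<lambda>z. f z + g z)"
| mul: "gen2 U f \<Longrightarrow> gen2 U g \<Longrightarrow> gen2 U (\<lambda>z. f z * g z)"
| comp: "smooth1 S \<phi> \<Longrightarrow> gen2 U f \<Longrightarrow> (\<forall>z\<in>U. f z \<in> S) \<Longrightarrow> gen2 U (\<lambda>z. \<phi> (f z))"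

lemma gen2_deriv:
  assumes "gen2 U f"
  shows "\<exists>f1 f2. (\<forall>z\<in>U. (f has_derivative (\<lambda>h. fst h * f1 z + snd h * f2 z)) (at z))
     \<and> gen2 U f1 \<and> gen2 U f2"
  using assms
proof (induction rule: gen2.induct)
  case (base f)
  then show ?case by (cases rule: smooth2.cases) (auto intro: gen2.base)
next
  case (add f g)
  then obtain f1 f2 g1 g2 where f: "\<forall>z\<in>U. (f has_derivative (\<lambda>h. fst h * f1 z + snd h * f2 z)) (at z)"
    "gen2 U f1" "gen2 U f2" and g: "\<forall>z\<in>U. (g has_derivative (\<lambda>h. fst h * g1 z + snd h * g2 z)) (at z)"
    "gen2 U g1" "gen2 U g2" by blast
  show ?case
  proof (intro exI conjI ballI)
    fix z assume "z \<in> U"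
    show "((\<lambda>z. f z + g z) has_derivative (\<lambda>h. fst h * (f1 z + g1 z) + snd h * (f2 z + g2 z))) (at z)"
      by (rule has_derivative_eq_rhs[OF has_derivative_add[OF f(1)[rule_format, OF \<open>z\<in>U\<close>] g(1)[rule_format, OF \<open>z\<in>U\<close>]]])
        (auto simp: algebra_simps)
  qed (auto intro: gen2.add f g)
next
  case (mul f g)
  then obtain f1 f2 g1 g2 where f: "\<forall>z\<in>U. (f has_derivative (\<lambda>h. fst h * f1 z + snd h * f2 z)) (at z)"
    "gen2 U f1" "gen2 U f2" and g: "\<forall>z\<in>U. (g has_derivative (\<lambda>h. fst h * g1 z + snd h * g2 z)) (at z)"
    "gen2 U g1" "gen2 U g2" by blast
  show ?case
  proof (intro exI conjI ballI)
    fix z assume "z \<in> U"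
    show "((\<lambda>z. f z * g z) has_derivative (\<lambda>h. fst h * (f z * g1 z + f1 z * g z) + snd h * (f z * g2 z + f2 z * g z))) (at z)"
      by (rule has_derivative_eq_rhs[OF has_derivative_mult[OF f(1)[rule_format, OF \<open>z\<in>U\<close>] g(1)[rule_format, OF \<open>z\<in>U\<close>]]])
        (auto simp: algebra_simps)
  qed (auto intro!: gen2.add gen2.mul f g mul.hyps)
next
  case (comp S \<phi> f)
  from comp.hyps(1) obtain \<phi>' where ph: "\<forall>x\<in>S. (\<phi> has_real_derivative \<phi>' x) (at x)" "smooth1 S \<phi>'"
    by (cases rule: smooth1.cases) auto
  from comp.IH obtain f1 f2 where f: "\<forall>z\<in>U. (f has_derivative (\<lambda>h. fst h * f1 z + snd h * f2 z)) (at z)"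
    "gen2 U f1" "gen2 U f2" by blast
  show ?case
  proof (intro exI conjI ballI)
    fix z assume z: "z \<in> U"
    have d: "(\<phi> has_real_derivative \<phi>' (f z)) (at (f z))" using ph(1) comp.hyps(3) z by blast
    show "((\<lambda>z. \<phi> (f z)) has_derivative (\<lambda>h. fst h * (\<phi>' (f z) * f1 z) + snd h * (\<phi>' (f z) * f2 z))) (at z)"
      by (rule has_derivative_eq_rhs[OF DERIV_compose_FDERIV[OF d f(1)[rule_format, OF z]]])
        (auto simp: algebra_simps)
  qed (auto intro!: gen2.mul gen2.comp[OF ph(2)] f comp.hyps)
qed

lemma gen2_smooth2: "gen2 U f \<Longrightarrow> smooth2 U f"
proof (coinduction arbitrary: f rule: smooth2.coinduct)
  case (smooth2 f)
  then show ?case using gen2_deriv[OF smooth2] by blast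
qed

lemma smooth2_const: "smooth2 U (\<lambda>z. c)"
proof -
  have "f = (\<lambda>z. c) \<Longrightarrow> smooth2 U f" for f c
  proof (coinduction arbitrary: f c rule: smooth2.coinduct)
    case (smooth2 f c)
    then show ?case by (intro exI[of _ f] exI[of _ "\<lambda>z. 0"] exI[of _ "\<lambda>z. 0"]) auto
  qed
  then show ?thesis by blast
qed

lemma smooth2_fst: "smooth2 U fst"
  by (rule smooth2.intros[where ?f1.0="\<lambda>z. 1" and ?f2.0="\<lambda>z. 0"]) (auto intro!: smooth2_const derivative_eq_intros)

lemma smooth2_snd: "smooth2 U snd"
  by (rule smooth2.intros[where ?f1.0="\<lambda>z. 0" and ?f2.0="\<lambda>z. 1"]) (auto intro!: smooth2_const derivative_eq_intros)



lemma smooth1_exp: "smooth1 S exp"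
proof -
  have "f = exp \<Longrightarrow> smooth1 S f" for f
  proof (coinduction arbitrary: f rule: smooth1.coinduct)
    case (smooth1 f) then show ?case by (auto intro!: exI[of _ exp] DERIV_exp)
  qed
  then show ?thesis by blast
qed

lemma powinv_deriv: "x > 0 \<Longrightarrow> ((\<lambda>x::real. c * inverse x ^ n) has_real_derivative (- c * n) * inverse x ^ (Suc n)) (at x)"
  apply (rule DERIV_cong)
   apply (rule DERIV_cmult)
   apply (rule DERIV_power)
   apply (rule DERIV_inverse) apply simp
  apply (cases n) apply (simp_all add: power2_eq_square field_simps)
  done

lemma smooth1_powinv: "smooth1 {0<..} (\<lambda>x. c * inverse x ^ n)"
proof -
  have "\<exists>c n. f = (\<lambda>x. c * inverse x ^ n) \<Longrightarrow> smooth1 {0<..} f" for f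
  proof (coinduction arbitrary: f rule: smooth1.coinduct)
    case (smooth1 f)
    then obtain c n where f: "f = (\<lambda>x. c * inverse x ^ n)" by blast
    have h1: "\<forall>x\<in>{0<..}. ((\<lambda>x. c * inverse x ^ n) has_real_derivative (- c * n) * inverse x ^ (Suc n)) (at x)"
      using powinv_deriv by auto
    have h2: "\<exists>c' n'. (\<lambda>x. (- c * n) * inverse x ^ (Suc n)) = (\<lambda>x. c' * inverse x ^ n')" by blast
    show ?case unfolding f
      apply (rule exI[of _ "\<lambda>x. c * inverse x ^ n"])
      apply (rule exI[of _ "\<lambda>x. (- c * n) * inverse x ^ (Suc n)"])
      using h1 h2 by blast
  qed
  then show ?thesis by blast
qed

lemma smooth1_ln: "smooth1 {0<..} ln"
proof (rule smooth1.intros[where f'="\<lambda>x. 1 * inverse x ^ 1"])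
  show "\<forall>x\<in>{0<..}. (ln has_real_derivative 1 * inverse x ^ 1) (at x)"
    by (auto intro!: derivative_eq_intros simp: field_simps)
qed (rule smooth1_powinv)

definition flat :: "real poly \<Rightarrow> real \<Rightarrow> real" where
  "flat p s = (if s > 0 then poly p (1 / s) * exp (- (1 / s)) else 0)"

lemma poly_exp_lim: "((\<lambda>t. poly p t * exp (- t)) \<longlongrightarrow> (0::real)) at_top"
proof -
  have "((\<lambda>t. \<Sum>i\<le>degree p. coeff p i * (t ^ i / exp t)) \<longlongrightarrow> (\<Sum>i\<le>degree p. coeff p i * 0)) at_top"
    by (intro tendsto_sum tendsto_mult tendsto_const tendsto_power_div_exp_0)
  moreover have "(\<lambda>t. \<Sum>i\<le>degree p. coeff p i * (t ^ i / exp t)) = (\<lambda>t. poly p t * exp (- t))"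
    by (auto simp: poly_altdef sum_distrib_right exp_minus field_simps sum_divide_distrib)
  ultimately show ?thesis by simp
qed

lemma flat_deriv0: "(flat p has_real_derivative 0) (at 0)"
proof -
  have r: "((\<lambda>y. (flat p y - flat p 0) / (y - 0)) \<longlongrightarrow> 0) (at_right 0)"
  proof -
    have "((\<lambda>t. poly ([:0,1:] * p) t * exp (- t)) \<longlongrightarrow> (0::real)) at_top" by (rule poly_exp_lim)
    from filterlim_compose[OF this filterlim_inverse_at_top_right]
    have lim: "((\<lambda>y. poly ([:0,1:] * p) (inverse y) * exp (- inverse y)) \<longlongrightarrow> 0) (at_right 0)"
      by (simp add: o_def)
    have "\<forall>\<^sub>F y in at_right 0. poly ([:0,1:] * p) (inverse y) * exp (- inverse y) = (flat p y - flat p 0) / (y - 0)"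
    proof (rule eventually_mono[OF eventually_at_right_less])
      fix y :: real assume "0 < y"
      then show "poly ([:0,1:] * p) (inverse y) * exp (- inverse y) = (flat p y - flat p 0) / (y - 0)"
        by (simp add: flat_def divide_inverse mult_ac)
    qed
    from tendsto_cong[OF this] lim show ?thesis by simp
  qed
  have l: "((\<lambda>y. (flat p y - flat p 0) / (y - 0)) \<longlongrightarrow> 0) (at_left 0)"
  proof -
    have "\<forall>\<^sub>F y in at_left 0. 0 = (flat p y - flat p 0) / (y - (0::real))"
      by (rule eventually_at_leftI[of "-1"]) (simp_all add: flat_def)
    from tendsto_cong[OF this] show ?thesis by (metis tendsto_const)
  qed
  show ?thesis unfolding has_field_derivative_iff
    using filterlim_split_at[OF l r] by simp
qed

lemma flat_deriv: "(flat p has_real_derivative flat ([:0,0,1:] * (p - pderiv p)) x) (at x)"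
proof (cases "x > 0")
  case True
  have d: "((\<lambda>s. poly p (1 / s) * exp (- (1 / s))) has_real_derivative
     poly (pderiv p) (1/x) * (- 1 / x^2) * exp (- (1/x)) + poly p (1/x) * (exp (- (1/x)) * (1 / x^2))) (at x)"
  proof -
  have a: "((\<lambda>s. 1 / s) has_real_derivative (- 1 / x^2)) (at x)" using True
    by (auto intro!: derivative_eq_intros simp: power2_eq_square)
  have b: "((\<lambda>s. poly p (1 / s)) has_real_derivative poly (pderiv p) (1/x) * (- 1 / x^2)) (at x)"
    by (rule DERIV_chain2[OF poly_DERIV a])
  have c: "((\<lambda>s. exp (- (1 / s))) has_real_derivative exp (- (1/x)) * (1 / x^2)) (at x)"
    using DERIV_chain2[OF DERIV_exp DERIV_minus[OF a]] by simp
  show ?thesis by (rule DERIV_cong[OF DERIV_mult[OF b c]]) (simp add: algebra_simps)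
qed
  have e: "poly (pderiv p) (1/x) * (- 1 / x^2) * exp (- (1/x)) + poly p (1/x) * (exp (- (1/x)) * (1 / x^2))
     = flat ([:0,0,1:] * (p - pderiv p)) x"
    using True by (simp add: flat_def algebra_simps power2_eq_square)
  show ?thesis
    by (rule has_field_derivative_transform_within_open[OF d[unfolded e], of "{0<..}"])
      (use True in \<open>auto simp: flat_def\<close>)
next
  case False
  show ?thesis
  proof (cases "x = 0")
    case True
    then show ?thesis using flat_deriv0[of p] by (simp add: flat_def)
  next
    case False
    with \<open>\<not> x > 0\<close> have x: "x < 0" by simp
    have "flat ([:0,0,1:] * (p - pderiv p)) x = 0" using x by (simp add: flat_def)
    moreover have "(flat p has_real_derivative 0) (at x)"
      by (rule has_field_derivative_transform_within_open[of "\<lambda>_. 0" 0 x "{..<0}"])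
        (use x in \<open>auto simp: flat_def\<close>)
    ultimately show ?thesis by simp
  qed
qed

lemma smooth1_flat: "smooth1 S (flat p)"
proof -
  have "\<exists>p. f = flat p \<Longrightarrow> smooth1 S f" for f
  proof (coinduction arbitrary: f rule: smooth1.coinduct)
    case (smooth1 f)
    then obtain p where f: "f = flat p" by blast
    have h1: "\<forall>x\<in>S. (flat p has_real_derivative flat ([:0,0,1:] * (p - pderiv p)) x) (at x)"
      using flat_deriv by blast
    have h2: "\<exists>q. flat ([:0,0,1:] * (p - pderiv p)) = flat q" by blast
    show ?case unfolding f
      apply (rule exI[of _ "flat p"])
      apply (rule exI[of _ "flat ([:0,0,1:] * (p - pderiv p))"])
      using h1 h2 by blast
  qed
  then show ?thesis by blast
qed



definition psi :: "real \<Rightarrow> real" where "psi = flat [:1:]"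
definition Phi :: "real \<Rightarrow> real" where "Phi s = (s + 1/2) * psi s"
definition gf :: "real \<Rightarrow> real" where "gf y = y + Phi (1 - y)"
definition Phid :: "real \<Rightarrow> real" where
  "Phid s = (if s > 0 then exp (- (1/s)) * (1 + 1/s + 1 / (2 * s * s)) else 0)"
definition gd :: "real \<Rightarrow> real" where "gd y = 1 - Phid (1 - y)"

lemma psi_eq: "psi s = (if s > 0 then exp (- (1/s)) else 0)"
  by (simp add: psi_def flat_def)

lemma psi_deriv: "(psi has_real_derivative (if s > 0 then exp (- (1/s)) / (s * s) else 0)) (at s)"
proof -
  have "flat ([:0,0,1:] * ([:1:] - pderiv [:1:])) s = (if s > 0 then exp (- (1/s)) / (s * s) else 0)"
    by (simp add: flat_def pderiv_pCons)
  then show ?thesis using flat_deriv[of "[:1:]" s] by (simp add: psi_def)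
qed

lemma Phi_deriv: "(Phi has_real_derivative Phid s) (at s)"
proof -
  have h: "((\<lambda>s. s + 1/2) has_real_derivative 1) (at s)" by (auto intro!: derivative_eq_intros)
  have "((\<lambda>s. (s + 1/2) * psi s) has_real_derivative Phid s) (at s)"
    by (rule DERIV_cong[OF DERIV_mult[OF h psi_deriv]]) (simp add: psi_eq Phid_def field_simps)
  then show ?thesis by (simp add: Phi_def[abs_def])
qed

lemma gf_deriv: "(gf has_real_derivative gd y) (at y)"
proof -
  have h: "((\<lambda>y. 1 - y) has_real_derivative -1) (at y)" by (auto intro!: derivative_eq_intros)
  have "((\<lambda>y. y + Phi (1 - y)) has_real_derivative 1 + Phid (1 - y) * (-1)) (at y)"
    by (rule DERIV_add[OF DERIV_ident DERIV_chain2[OF Phi_deriv h]])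
  then show ?thesis by (simp add: gf_def[abs_def] gd_def)
qed

lemma exp_ineq1: assumes "(u::real) \<ge> 0" shows "1 + u + u^2/2 \<le> exp u"
proof -
  have "(\<lambda>x. exp x - 1 - x - x^2/2) 0 \<le> (\<lambda>x. exp x - 1 - x - x^2/2) u"
  proof (rule DERIV_nonneg_imp_increasing_open[OF assms])
    fix x :: real assume x: "0 < x" "x < u"
    have e: "exp x \<ge> 1 + x" by (rule exp_ge_add_one_self)
    have d: "((\<lambda>x. exp x - 1 - x - x^2/2) has_real_derivative exp x - 1 - x) (at x)"
      by (auto intro!: derivative_eq_intros)
    have "exp x - 1 - x \<ge> 0" using e by linarith
    then show "\<exists>y. ((\<lambda>x. exp x - 1 - x - x^2/2) has_real_derivative y) (at x) \<and> y \<ge> 0"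
      using d by blast
  qed (auto intro!: continuous_intros)
  then show ?thesis by simp
qed

lemma exp_ineq2: assumes "(u::real) > 0" shows "2 * (1 - u) * exp u < 2 + u/2 - u^2/2 - u^3/2"
proof -
  let ?f = "\<lambda>x::real. 2 + x/2 - x^2/2 - x^3/2 - 2 * (1 - x) * exp x"
  have "?f 0 < ?f u"
  proof (rule DERIV_pos_imp_increasing[OF assms])
    fix x :: real assume x: "0 \<le> x" "x \<le> u"
    have e: "exp x \<ge> 1 + x" by (rule exp_ge_add_one_self)
    have m: "2 * x * (1 + x) \<le> 2 * x * exp x" using x e by (intro mult_left_mono) auto
    have q0: "1/2 - x - 3 * x^2/2 + 2 * x * (1 + x) = 1/2 + x + x^2/2"
      by (simp add: power2_eq_square algebra_simps)
    have "x^2 \<ge> 0" by simp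
    then have q: "1/2 - x - 3 * x^2/2 + 2 * x * (1 + x) > 0" using x q0 by linarith
    have pos: "1/2 - x - 3 * x^2 / 2 + 2 * x * exp x > 0" using m q by linarith
    have d: "(?f has_real_derivative 1/2 - x - 3 * x^2 / 2 + 2 * x * exp x) (at x)"
      by (auto intro!: derivative_eq_intros) (simp add: algebra_simps)
    show "\<exists>y. (?f has_real_derivative y) (at x) \<and> y > 0"
      using d pos by blast
  qed
  then show ?thesis by simp
qed

lemma Phi_nonneg: "Phi s \<ge> 0"
  by (simp add: Phi_def psi_eq)

lemma Phid_nonneg: "Phid s \<ge> 0"
  by (simp add: Phid_def)

lemma Phid_le1: "Phid s \<le> 1"
proof (cases "s > 0")
  case True
  define u where "u = 1 / s"
  have u: "u > 0" using True by (simp add: u_def)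
  have "1 + u + u^2/2 \<le> exp u" using exp_ineq1[of u] u by simp
  then have "exp (- u) * (1 + u + u^2/2) \<le> exp (-u) * exp u"
    by (intro mult_left_mono) auto
  also have "exp (-u) * exp u = 1" by (simp add: exp_minus)
  finally have "exp (- u) * (1 + u + u^2/2) \<le> 1" .
  moreover have eq: "1 / (2 * s * s) = u^2/2" by (simp add: u_def power2_eq_square)
  moreover have "Phid s = exp (- u) * (1 + u + u^2/2)"
    by (simp only: Phid_def if_P[OF True] eq u_def[symmetric])
  ultimately show ?thesis by simp
qed (simp add: Phid_def)

lemma gd_nonneg: "gd y \<ge> 0" using Phid_le1 by (simp add: gd_def)
lemma gd_le1: "gd y \<le> 1" using Phid_nonneg by (simp add: gd_def)

lemma gf_eq: "y \<ge> 1 \<Longrightarrow> gf y = y"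
  by (simp add: gf_def Phi_def psi_eq)

lemma gf_ge: "gf y \<ge> y"
  using Phi_nonneg by (simp add: gf_def)

lemma gf_le: "gf y \<le> \<bar>y\<bar> + 3/2"
proof (cases "1 - y > 0")
  case True
  have "exp (- (1 / (1 - y))) \<le> 1" using True by simp
  then have "Phi (1 - y) \<le> (1 - y + 1/2) * 1" using True
    unfolding Phi_def psi_eq by (intro mult_left_mono) auto
  then show ?thesis by (simp add: gf_def)
next
  case False
  then show ?thesis by (simp add: gf_def Phi_def psi_eq)
qed

lemma gf_lb_neg: assumes "y \<le> -1" shows "gf y \<ge> 1/4"
proof -
  define s where "s = 1 - y"
  define u where "u = 1 / s"
  have s: "s \<ge> 2" using assms by (simp add: s_def)
  have u: "u > 0" "u \<le> 1/2" using s by (auto simp: u_def field_simps)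
  have e: "exp (- u) \<ge> 1 - u" using exp_ge_add_one_self[of "-u"] by simp
  have "(s + 1/2) * exp (- u) \<ge> (s + 1/2) * (1 - u)" using e s by (intro mult_left_mono) auto
  moreover have "(s + 1/2) * (1 - u) = s - 1/2 - u/2" using s by (simp add: u_def field_simps)
  ultimately have "(s + 1/2) * exp (- u) \<ge> s - 1/2 - u/2" by simp
  moreover have "gf y = 1 - s + (s + 1/2) * exp (- u)" using s
    by (simp add: gf_def Phi_def psi_eq s_def u_def)
  ultimately show ?thesis using u by linarith
qed

lemma gf_mono: assumes "a \<le> b" shows "gf a \<le> gf b"
proof (rule DERIV_nonneg_imp_increasing_open[OF assms])
  fix x assume "a < x" "x < b"
  show "\<exists>y. (gf has_real_derivative y) (at x) \<and> y \<ge> 0"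
    using gf_deriv gd_nonneg by blast
next
  show "continuous_on {a..b} gf"
    using gf_deriv by (meson DERIV_isCont continuous_at_imp_continuous_on)
qed

lemma gf_lb: "gf y \<ge> 1/4"
proof (cases "y \<le> -1")
  case True then show ?thesis by (rule gf_lb_neg)
next
  case False
  then have "gf (-1) \<le> gf y" by (intro gf_mono) auto
  then show ?thesis using gf_lb_neg[of "-1"] by simp
qed

lemma gf_pos: "gf y > 0"
  using gf_lb[of y] by simp

lemma key_u:
  fixes u E :: real
  assumes u: "0 < u" "u < 1" and E: "E = exp (- u)"
  shows "(1/u - 1) * (1 - E * (1 + u + 1 / (2 * (1/u) * (1/u)))) < 1 - 1/u + (1/u + 1/2) * E"
proof -
  have h0: "2 * (1 - u) * exp u < 2 + u/2 - u^2/2 - u^3/2" by (rule exp_ineq2) (use u in simp)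
  have "2 * (1 - u) * exp u * E < (2 + u/2 - u^2/2 - u^3/2) * E"
    using h0 E by (intro mult_strict_right_mono) auto
  moreover have "exp u * E = 1" using E by (simp add: exp_minus)
  ultimately have h: "2 * (1 - u) < (2 + u/2 - u^2/2 - u^3/2) * E"
    by (metis mult.assoc mult.right_neutral)
  have l: "u * ((1/u - 1) * (1 - E * (1 + u + 1 / (2 * (1/u) * (1/u))))) = (1 - u) * (1 - E * (1 + u + u^2/2))"
    using u by (simp add: field_simps power2_eq_square)
  have r: "u * (1 - 1/u + (1/u + 1/2) * E) = u - 1 + (1 + u/2) * E"
    using u by (simp add: field_simps)
  have eq: "(1 - u) * (1 - E * (1 + u + u^2/2)) - (u - 1 + (1 + u/2) * E)
     = 2 * (1 - u) - (2 + u/2 - u^2/2 - u^3/2) * E"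
    by (simp add: field_simps power2_eq_square power3_eq_cube)
  have "(1 - u) * (1 - E * (1 + u + u^2/2)) - (u - 1 + (1 + u/2) * E) < 0"
    unfolding eq using h by simp
  then have "u * ((1/u - 1) * (1 - E * (1 + u + 1 / (2 * (1/u) * (1/u))))) < u * (1 - 1/u + (1/u + 1/2) * E)"
    unfolding l r by simp
  then show ?thesis using u by simp
qed

lemma gf_key: assumes "y < 0" shows "- y * gd y < gf y"
proof -
  define s where "s = 1 - y"
  define u where "u = 1 / s"
  have s: "s > 1" using assms by (simp add: s_def)
  have u: "0 < u" "u < 1" using s by (auto simp: u_def field_simps)
  have su: "s = 1 / u" using s by (simp add: u_def)
  have "gd y = 1 - exp (- u) * (1 + u + 1 / (2 * (1/u) * (1/u)))"
    using s u by (simp add: gd_def Phid_def s_def[symmetric] su)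
  moreover have "gf y = 1 - 1/u + (1/u + 1/2) * exp (- u)"
  proof -
    have "gf y = (1 - s) + (s + 1/2) * exp (- (1 / s))"
      using s by (simp add: gf_def Phi_def psi_eq s_def)
    then show ?thesis by (simp add: su)
  qed
  moreover have "- y = 1/u - 1" using su by (simp add: s_def)
  ultimately show ?thesis using key_u[OF u refl] by simp
qed



lemma gen2_c: "gen2 U (\<lambda>z. c)" by (rule gen2.base[OF smooth2_const])
lemma gen2_fst: "gen2 U fst" by (rule gen2.base[OF smooth2_fst])
lemma gen2_snd: "gen2 U snd" by (rule gen2.base[OF smooth2_snd])

lemma gen2_diff: "gen2 U f \<Longrightarrow> gen2 U g \<Longrightarrow> gen2 U (\<lambda>z. f z - g z)"
proof -
  assume "gen2 U f" "gen2 U g"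
  then have "gen2 U (\<lambda>z. f z + (\<lambda>z. -1) z * g z)" by (intro gen2.add gen2.mul gen2_c)
  then show ?thesis by simp
qed

lemma gen2_divc: "gen2 U f \<Longrightarrow> gen2 U (\<lambda>z. f z / c)"
proof -
  assume "gen2 U f"
  then have "gen2 U (\<lambda>z. f z * (\<lambda>z. 1 / c) z)" by (intro gen2.mul gen2_c)
  then show ?thesis by simp
qed

lemma gen2_exp: "gen2 U f \<Longrightarrow> gen2 U (\<lambda>z. exp (f z))"
  by (rule gen2.comp[OF smooth1_exp[of UNIV]]) auto

lemma gen2_ln: "gen2 U f \<Longrightarrow> (\<forall>z\<in>U. f z > 0) \<Longrightarrow> gen2 U (\<lambda>z. ln (f z))"
  by (rule gen2.comp[OF smooth1_ln]) auto

lemma gen2_inv: "gen2 U f \<Longrightarrow> (\<forall>z\<in>U. f z > 0) \<Longrightarrow> gen2 U (\<lambda>z. 1 / f z)"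
proof -
  assume "gen2 U f" "\<forall>z\<in>U. f z > 0"
  then have "gen2 U (\<lambda>z. (\<lambda>x. 1 * inverse x ^ 1) (f z))"
    by (intro gen2.comp[OF smooth1_powinv]) auto
  then show ?thesis by (simp add: divide_inverse)
qed

lemma gen2_psi: "gen2 U f \<Longrightarrow> gen2 U (\<lambda>z. psi (f z))"
  unfolding psi_def by (rule gen2.comp[OF smooth1_flat[of UNIV]]) auto

lemma gen2_gf: "gen2 U f \<Longrightarrow> gen2 U (\<lambda>z. gf (f z))"
proof -
  assume f: "gen2 U f"
  have "gen2 U (\<lambda>z. f z + ((\<lambda>z. 1 - f z) z + (\<lambda>z. 1/2) z) * psi ((\<lambda>z. 1 - f z) z))"
    by (intro gen2.add gen2.mul gen2_psi gen2_diff gen2_c f)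
  then show ?thesis by (simp add: gf_def Phi_def)
qed

definition Vf :: "real \<Rightarrow> real \<Rightarrow> real \<Rightarrow> real" where
  "Vf m T r = T / 2 + r + 2 * m * ln (gf ((r - 2 * m) * exp (T / (4 * m))) / (2 * m))"

lemma gen2_V: assumes m: "m > 0" shows "gen2 U (case_prod (Vf m))"
proof -
  have Y: "gen2 U (\<lambda>z. gf ((snd z - 2 * m) * exp (fst z / (4 * m))) / (2 * m))"
    by (intro gen2_divc gen2_gf gen2.mul gen2_diff gen2_exp gen2_snd gen2_fst gen2_c)
  have "gen2 U (\<lambda>z. fst z / 2 + snd z + (\<lambda>z. 2 * m) z * ln (gf ((snd z - 2 * m) * exp (fst z / (4 * m))) / (2 * m)))"
    by (intro gen2.add gen2.mul gen2_divc gen2_fst gen2_snd gen2_c gen2_ln Y) (use m gf_pos in auto)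
  moreover have "case_prod (Vf m) = (\<lambda>z. fst z / 2 + snd z + (\<lambda>z. 2 * m) z * ln (gf ((snd z - 2 * m) * exp (fst z / (4 * m))) / (2 * m)))"
    by (auto simp: Vf_def fun_eq_iff)
  ultimately show ?thesis by simp
qed

lemma gf_chain: "(f has_real_derivative f') (at x) \<Longrightarrow> ((\<lambda>x. gf (f x)) has_real_derivative gd (f x) * f') (at x)"
  by (rule DERIV_chain2[OF gf_deriv])

definition VT :: "real \<Rightarrow> real \<Rightarrow> real \<Rightarrow> real" where
  "VT m T r = (let y = (r - 2 * m) * exp (T / (4 * m)) in 1/2 + y * gd y / (2 * gf y))"
definition Vr :: "real \<Rightarrow> real \<Rightarrow> real \<Rightarrow> real" where
  "Vr m T r = (let y = (r - 2 * m) * exp (T / (4 * m)) in 1 + 2 * m * gd y * exp (T / (4 * m)) / gf y)"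

lemma VT_deriv: assumes m: "m > 0" shows "((\<lambda>T. Vf m T r) has_real_derivative VT m T r) (at T)"
proof -
  let ?y = "(r - 2 * m) * exp (T / (4 * m))"
  have Y: "((\<lambda>T. (r - 2 * m) * exp (T / (4 * m))) has_real_derivative ?y / (4 * m)) (at T)"
    using m by (auto intro!: derivative_eq_intros)
  have G: "((\<lambda>T. gf ((r - 2 * m) * exp (T / (4 * m)))) has_real_derivative gd ?y * (?y / (4 * m))) (at T)"
    by (rule gf_chain[OF Y])
  have p: "gf ?y > 0" by (rule gf_pos)
  have Q: "((\<lambda>T. gf ((r - 2 * m) * exp (T / (4 * m))) / (2 * m)) has_real_derivative gd ?y * (?y / (4 * m)) / (2 * m)) (at T)"
    by (rule DERIV_cdivide[OF G])
  have p2: "gf ?y / (2 * m) > 0" using p m by simp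
  have L: "((\<lambda>T. ln (gf ((r - 2 * m) * exp (T / (4 * m))) / (2 * m))) has_real_derivative 1 / (gf ?y / (2 * m)) * (gd ?y * (?y / (4 * m)) / (2 * m))) (at T)"
    by (rule DERIV_chain2[OF DERIV_ln_divide[OF p2] Q])
  have A: "((\<lambda>T. T / 2 + r) has_real_derivative 1 / 2) (at T)" by (auto intro!: derivative_eq_intros)
  have "((\<lambda>T. T / 2 + r + 2 * m * ln (gf ((r - 2 * m) * exp (T / (4 * m))) / (2 * m))) has_real_derivative
      1 / 2 + 2 * m * (1 / (gf ?y / (2 * m)) * (gd ?y * (?y / (4 * m)) / (2 * m)))) (at T)"
    by (rule DERIV_add[OF A DERIV_cmult[OF L]])
  moreover have "1 / 2 + 2 * m * (1 / (gf ?y / (2 * m)) * (gd ?y * (?y / (4 * m)) / (2 * m))) = VT m T r"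
    using m p by (simp add: VT_def Let_def field_simps)
  ultimately show ?thesis unfolding Vf_def[abs_def] by simp
qed

lemma Vr_deriv: assumes m: "m > 0" shows "((\<lambda>r. Vf m T r) has_real_derivative Vr m T r) (at r)"
proof -
  let ?y = "(r - 2 * m) * exp (T / (4 * m))"
  have Y: "((\<lambda>r. (r - 2 * m) * exp (T / (4 * m))) has_real_derivative exp (T / (4 * m))) (at r)"
    by (auto intro!: derivative_eq_intros)
  have G: "((\<lambda>r. gf ((r - 2 * m) * exp (T / (4 * m)))) has_real_derivative gd ?y * exp (T / (4 * m))) (at r)"
    by (rule gf_chain[OF Y])
  have p: "gf ?y > 0" by (rule gf_pos)
  have Q: "((\<lambda>r. gf ((r - 2 * m) * exp (T / (4 * m))) / (2 * m)) has_real_derivative gd ?y * exp (T / (4 * m)) / (2 * m)) (at r)"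
    by (rule DERIV_cdivide[OF G])
  have p2: "gf ?y / (2 * m) > 0" using p m by simp
  have L: "((\<lambda>r. ln (gf ((r - 2 * m) * exp (T / (4 * m))) / (2 * m))) has_real_derivative 1 / (gf ?y / (2 * m)) * (gd ?y * exp (T / (4 * m)) / (2 * m))) (at r)"
    by (rule DERIV_chain2[OF DERIV_ln_divide[OF p2] Q])
  have A: "((\<lambda>r. T / 2 + r) has_real_derivative 1) (at r)" by (auto intro!: derivative_eq_intros)
  have "((\<lambda>r. T / 2 + r + 2 * m * ln (gf ((r - 2 * m) * exp (T / (4 * m))) / (2 * m))) has_real_derivative
      1 + 2 * m * (1 / (gf ?y / (2 * m)) * (gd ?y * exp (T / (4 * m)) / (2 * m)))) (at r)"
    by (rule DERIV_add[OF A DERIV_cmult[OF L]])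
  moreover have "1 + 2 * m * (1 / (gf ?y / (2 * m)) * (gd ?y * exp (T / (4 * m)) / (2 * m))) = Vr m T r"
    using m p by (simp add: Vr_def Let_def field_simps)
  ultimately show ?thesis unfolding Vf_def[abs_def] by simp
qed



lemma VT_pos: assumes m: "m > 0" shows "VT m T r > 0"
proof -
  define y where "y = (r - 2 * m) * exp (T / (4 * m))"
  have g: "gf y > 0" by (rule gf_pos)
  have "y * gd y / (2 * gf y) > - 1/2"
  proof (cases "y \<ge> 0")
    case True
    then have "y * gd y \<ge> 0" using gd_nonneg by simp
    then have "y * gd y / (2 * gf y) \<ge> 0" using g by simp
    then show ?thesis by linarith
  next
    case False
    then have "- y * gd y < gf y" by (intro gf_key) simp
    then show ?thesis using g by (simp add: field_simps)
  qed
  then show ?thesis unfolding VT_def Let_def y_def[symmetric] by linarith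
qed

lemma Vf_mono: assumes m: "m > 0" and "T1 < T2" shows "Vf m T1 r < Vf m T2 r"
  using assms(2) by (rule DERIV_pos_imp_increasing) (use VT_deriv[OF m] VT_pos[OF m] in blast)

lemma Vf_cont: assumes m: "m > 0" shows "continuous_on A (\<lambda>T. Vf m T r)"
  using VT_deriv[OF m] by (meson DERIV_isCont continuous_at_imp_continuous_on)

lemma Vf_lower: assumes m: "m > 0" shows "Vf m T r \<ge> T / 2 + r + 2 * m * ln (1 / (8 * m))"
proof -
  have "gf ((r - 2 * m) * exp (T / (4 * m))) \<ge> 1/4" by (rule gf_lb)
  then have "ln (1 / (8 * m)) \<le> ln (gf ((r - 2 * m) * exp (T / (4 * m))) / (2 * m))"
    using m by (subst ln_le_cancel_iff) (auto simp: field_simps)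
  then show ?thesis unfolding Vf_def using m by simp
qed

lemma Vf_upper: assumes m: "m > 0" and T: "T \<le> 0"
  shows "Vf m T r \<le> T / 2 + r + 2 * m * ln ((\<bar>r - 2 * m\<bar> + 3/2) / (2 * m))"
proof -
  let ?y = "(r - 2 * m) * exp (T / (4 * m))"
  have e: "exp (T / (4 * m)) \<le> 1" using m T by (simp add: divide_nonpos_pos)
  have "\<bar>?y\<bar> \<le> \<bar>r - 2 * m\<bar>" using e by (simp add: abs_mult mult_left_le)
  then have "gf ?y \<le> \<bar>r - 2 * m\<bar> + 3/2" using gf_le[of ?y] by linarith
  then have "ln (gf ?y / (2 * m)) \<le> ln ((\<bar>r - 2 * m\<bar> + 3/2) / (2 * m))"
    using m gf_pos[of ?y] by (subst ln_le_cancel_iff) (auto simp: divide_right_mono)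
  then show ?thesis unfolding Vf_def using m by simp
qed

lemma Vf_surj: assumes m: "m > 0" shows "\<exists>T. Vf m T r = v"
proof -
  define C1 where "C1 = 2 * m * ln (1 / (8 * m))"
  define C2 where "C2 = 2 * m * ln ((\<bar>r - 2 * m\<bar> + 3/2) / (2 * m))"
  define T1 where "T1 = min 0 (2 * (v - r - C2))"
  define T2 where "T2 = 2 * (v - r - C1)"
  have t1: "T1 \<le> 0" "T1 \<le> 2 * (v - r - C2)" by (auto simp: T1_def)
  have a0: "T1 / 2 + r + C2 \<le> v" using t1(2) by (simp add: field_simps)
  have a1: "Vf m T1 r \<le> T1 / 2 + r + C2"
    using Vf_upper[OF m t1(1), of r] unfolding C2_def by simp
  have a: "Vf m T1 r \<le> v" using a0 a1 by linarith
  have b0: "T2 / 2 + r + C1 = v" by (simp add: T2_def field_simps)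
  have b1: "Vf m T2 r \<ge> T2 / 2 + r + C1" using Vf_lower[OF m, of T2 r] unfolding C1_def by simp
  have b: "Vf m T2 r \<ge> v" using b0 b1 by simp
  show ?thesis
  proof (cases "T1 \<le> T2")
    case True
    from IVT'[of "\<lambda>T. Vf m T r", OF a b True Vf_cont[OF m]] show ?thesis by blast
  next
    case False
    then have "Vf m T2 r < Vf m T1 r" using Vf_mono[OF m] by simp
    with a b have "Vf m T2 r = v" by simp
    then show ?thesis by blast
  qed
qed

lemma Vf_inj: assumes m: "m > 0" and "Vf m T1 r = Vf m T2 r" shows "T1 = T2"
  using Vf_mono[OF m, of T1 T2 r] Vf_mono[OF m, of T2 T1 r] assms(2) by (cases "T1 < T2"; cases "T2 < T1") auto

definition Tinv :: "real \<Rightarrow> real \<Rightarrow> real \<Rightarrow> real" where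
  "Tinv m v r = (THE T. Vf m T r = v)"

lemma Tinv_Vf: assumes m: "m > 0" shows "Tinv m (Vf m T r) r = T"
  unfolding Tinv_def by (rule the_equality) (use Vf_inj[OF m] in auto)

lemma Vf_Tinv: assumes m: "m > 0" shows "Vf m (Tinv m v r) r = v"
proof -
  obtain T where "Vf m T r = v" using Vf_surj[OF m] by blast
  then show ?thesis using Tinv_Vf[OF m, of T r] by simp
qed

lemma spacelike: assumes m: "m > 0" and r: "r > 0" shows "spacelike_graph m (Vf m T) r"
proof -
  define E where "E = exp (T / (4 * m))"
  define y where "y = (r - 2 * m) * E"
  have E: "E > 0" by (simp add: E_def)
  have d: "deriv (Vf m T) r = Vr m T r" by (rule DERIV_imp_deriv[OF Vr_deriv[OF m]])
  define a where "a = Vr m T r"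
  have g: "gf y > 0" by (rule gf_pos)
  have a_def': "a = 1 + 2 * m * E * (gd y / gf y)" unfolding a_def Vr_def Let_def E_def[symmetric] y_def[symmetric]
    by simp
  have k: "gd y / gf y \<ge> 0" using g gd_nonneg[of y] by simp
  have "2 * m * E * (gd y / gf y) \<ge> 0" using m E k by (intro mult_nonneg_nonneg) auto
  then have a1: "a \<ge> 1" unfolding a_def' by linarith
  have la: "lapse m r * a < 2"
  proof (cases "r \<le> 2 * m")
    case True
    then have "lapse m r \<le> 0" using r by (simp add: lapse_def field_simps)
    then have "lapse m r * a \<le> 0" using a1 by (simp add: mult_nonpos_nonneg)
    then show ?thesis by simp
  next
    case False
    then have x: "r - 2 * m > 0" by simp
    then have y: "y > 0" using E by (simp add: y_def)
    have "y * gd y \<le> y" using y gd_le1[of y] by (simp add: mult_left_le)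
    also have "\<dots> \<le> gf y" by (rule gf_ge)
    finally have ky: "y * (gd y / gf y) \<le> 1" using g by (simp add: field_simps)
    have "lapse m r * a = ((r - 2 * m) + 2 * m * (y * (gd y / gf y))) / r"
      unfolding a_def' lapse_def y_def using r by (simp add: field_simps)
    also have "\<dots> \<le> ((r - 2 * m) + 2 * m * 1) / r"
      using ky m r by (intro divide_right_mono add_left_mono mult_left_mono) auto
    also have "\<dots> < 2" using r m by (simp add: field_simps)
    finally show ?thesis .
  qed
  have "2 * a - lapse m r * a^2 = a * (2 - lapse m r * a)" by (simp add: power2_eq_square algebra_simps)
  also have "\<dots> > 0" using a1 la by simp
  finally show ?thesis unfolding spacelike_graph_def Let_def d a_def by simp
qed



lemma EF_open: "open EF_region" unfolding EF_region_def by (intro open_Times) auto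

lemma EF_mem: "z \<in> EF_region \<longleftrightarrow> snd z > 0" by (cases z) (auto simp: EF_region_def)

lemma f1_eq:
  assumes m: "m > 0" and D: "\<forall>z\<in>EF_region. (case_prod (Vf m) has_derivative (\<lambda>h. fst h * f1 z + snd h * f2 z)) (at z)"
    and r: "r > 0"
  shows "f1 (T, r) = VT m T r"
proof -
  have P: "((\<lambda>T. (T, r)) has_derivative (\<lambda>h. (h, 0))) (at T)"
    by (auto intro!: derivative_eq_intros)
  have "(T, r) \<in> EF_region" using r by (simp add: EF_mem)
  with D have Dz: "(case_prod (Vf m) has_derivative (\<lambda>h. fst h * f1 (T, r) + snd h * f2 (T, r))) (at (T, r))" by blast
  have "((\<lambda>T. case_prod (Vf m) (T, r)) has_derivative (\<lambda>h. fst (h, 0::real) * f1 (T, r) + snd (h, 0::real) * f2 (T, r))) (at T)"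
    by (rule has_derivative_compose[OF P Dz])
  then have "((\<lambda>T. Vf m T r) has_derivative (\<lambda>h. f1 (T, r) * h)) (at T)"
    by (simp add: mult.commute)
  then have "((\<lambda>T. Vf m T r) has_real_derivative f1 (T, r)) (at T)"
    by (simp add: has_field_derivative_def)
  then show ?thesis using VT_deriv[OF m] by (rule DERIV_unique)
qed

lemma Tinv_smooth: assumes m: "m > 0" shows "smooth2 EF_region (case_prod (Tinv m))"
proof -
  let ?U = EF_region
  have "smooth2 ?U (case_prod (Vf m))" by (rule gen2_smooth2[OF gen2_V[OF m]])
  then obtain f1 f2 where D: "\<forall>z\<in>?U. (case_prod (Vf m) has_derivative (\<lambda>h. fst h * f1 z + snd h * f2 z)) (at z)"
    and s1: "smooth2 ?U f1" and s2: "smooth2 ?U f2"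
    by (cases rule: smooth2.cases) auto
  have f1pos: "\<forall>z\<in>?U. f1 z > 0"
  proof
    fix z assume z: "z \<in> ?U"
    obtain T r where zz: "z = (T, r)" by (cases z)
    have r: "r > 0" using z zz by (simp add: EF_mem)
    show "f1 z > 0" unfolding zz f1_eq[OF m D r] by (rule VT_pos[OF m])
  qed
  define G where "G z = (Tinv m (fst z) (snd z), snd z)" for z
  define F where "F z = (Vf m (fst z) (snd z), snd z)" for z
  have GU: "G z \<in> ?U" if "z \<in> ?U" for z using that by (simp add: G_def EF_mem)
  have FG: "F (G z) = z" for z by (simp add: F_def G_def Vf_Tinv[OF m])
  have GF: "G (F z) = z" for z by (simp add: F_def G_def Tinv_Vf[OF m])
  have Fd: "(F has_derivative (\<lambda>h. (fst h * f1 w + snd h * f2 w, snd h))) (at w)" if w: "w \<in> ?U" for w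
  proof -
    have "((\<lambda>z. (case_prod (Vf m) z, snd z)) has_derivative (\<lambda>h. (fst h * f1 w + snd h * f2 w, snd h))) (at w)"
      by (rule has_derivative_Pair[OF D[rule_format, OF w] has_derivative_snd[OF has_derivative_ident]])
    moreover have "(\<lambda>z. (case_prod (Vf m) z, snd z)) = F" by (auto simp: F_def fun_eq_iff split_beta)
    ultimately show ?thesis by simp
  qed
  have Fc: "continuous_on ?U F"
    using Fd by (meson continuous_at_imp_continuous_on has_derivative_continuous)
  have Gd: "(G has_derivative (\<lambda>h. ((fst h - snd h * f2 (G z)) / f1 (G z), snd h))) (at z)" if z: "z \<in> ?U" for z
  proof -
    let ?w = "G z"
    have w: "?w \<in> ?U" by (rule GU[OF z])
    have nz: "f1 ?w \<noteq> 0" using f1pos w by fastforce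
    have "(G has_derivative (\<lambda>h. ((fst h - snd h * f2 ?w) / f1 ?w, snd h))) (at (F ?w))"
    proof (rule has_derivative_inverse_strong[OF EF_open w Fc _ Fd[OF w]])
      show "\<And>x. x \<in> ?U \<Longrightarrow> G (F x) = x" by (rule GF)
      show "(\<lambda>h. (fst h * f1 ?w + snd h * f2 ?w, snd h)) \<circ> (\<lambda>h. ((fst h - snd h * f2 ?w) / f1 ?w, snd h)) = id"
        using nz by (auto simp: fun_eq_iff field_simps)
    qed
    then show ?thesis by (simp add: FG)
  qed
  have main: "smooth2 ?U (\<lambda>z. H (G z))" if "smooth2 ?U H" for H
  proof -
    have "\<exists>H. smooth2 ?U H \<and> f = (\<lambda>z. H (G z)) \<Longrightarrow> smooth2 ?U f" for f
    proof (coinduction arbitrary: f rule: smooth2.coinduct)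
      case (smooth2 f)
      then obtain H where H: "smooth2 ?U H" and f: "f = (\<lambda>z. H (G z))" by blast
      from H obtain H1 H2 where HD: "\<forall>z\<in>?U. (H has_derivative (\<lambda>h. fst h * H1 z + snd h * H2 z)) (at z)"
        and h1: "smooth2 ?U H1" and h2: "smooth2 ?U H2"
        by (cases rule: smooth2.cases) auto
      define K1 where "K1 w = H1 w * (1 / f1 w)" for w
      define K2 where "K2 w = H2 w - f2 w * (H1 w * (1 / f1 w))" for w
      have g1: "gen2 ?U (\<lambda>w. 1 / f1 w)" by (rule gen2_inv[OF gen2.base[OF s1] f1pos])
      have k1: "smooth2 ?U K1" unfolding K1_def[abs_def]
        by (rule gen2_smooth2) (intro gen2.mul gen2.base h1 g1)
      have k2: "smooth2 ?U K2" unfolding K2_def[abs_def]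
        by (rule gen2_smooth2) (intro gen2_diff gen2.mul gen2.base h1 h2 s2 g1)
      have der: "((\<lambda>z. H (G z)) has_derivative (\<lambda>h. fst h * K1 (G z) + snd h * K2 (G z))) (at z)" if z: "z \<in> ?U" for z
      proof -
        have w: "G z \<in> ?U" by (rule GU[OF z])
        have nz: "f1 (G z) \<noteq> 0" using f1pos w by fastforce
        have "((\<lambda>z. H (G z)) has_derivative (\<lambda>h. fst ((\<lambda>h. ((fst h - snd h * f2 (G z)) / f1 (G z), snd h)) h) * H1 (G z)
              + snd ((\<lambda>h. ((fst h - snd h * f2 (G z)) / f1 (G z), snd h)) h) * H2 (G z))) (at z)"
          by (rule has_derivative_compose[OF Gd[OF z] HD[rule_format, OF w]])
        moreover have "(\<lambda>h. fst ((\<lambda>h. ((fst h - snd h * f2 (G z)) / f1 (G z), snd h)) h) * H1 (G z)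
              + snd ((\<lambda>h. ((fst h - snd h * f2 (G z)) / f1 (G z), snd h)) h) * H2 (G z))
             = (\<lambda>h. fst h * K1 (G z) + snd h * K2 (G z))"
          using nz by (auto simp: fun_eq_iff K1_def K2_def field_simps)
        ultimately show ?thesis by simp
      qed
      show ?case
        apply (rule exI[of _ f])
        apply (rule exI[of _ "\<lambda>z. K1 (G z)"])
        apply (rule exI[of _ "\<lambda>z. K2 (G z)"])
        using der k1 k2 f by blast
    qed
    then show ?thesis using that by blast
  qed
  have "smooth2 ?U (\<lambda>z. fst (G z))" by (rule main[OF smooth2_fst])
  moreover have "(\<lambda>z. fst (G z)) = case_prod (Tinv m)" by (auto simp: G_def fun_eq_iff split_beta)
  ultimately show ?thesis by simp
qed



lemma rcut_lim: fixes m :: real assumes m: "m > 0"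
  shows "((\<lambda>T. 2 * m + 2 * 1 * exp (- T / (4 * m))) \<longlongrightarrow> 2 * m) at_top"
proof -
  have "LIM T at_top. (\<lambda>T::real. 1 / (4 * m)) T * (T::real) :> at_top"
    by (rule filterlim_tendsto_pos_mult_at_top[OF tendsto_const _ filterlim_ident]) (use m in simp)
  then have "LIM T at_top. - ((\<lambda>T::real. 1 / (4 * m)) T * (T::real)) :> at_bot"
    by (simp add: filterlim_uminus_at_top)
  from filterlim_compose[OF exp_at_bot this]
  have "((\<lambda>T. exp (- (1 / (4 * m) * T))) \<longlongrightarrow> 0) at_top" by simp
  then have "((\<lambda>T. exp (- T / (4 * m))) \<longlongrightarrow> 0) at_top" by simp
  then have "((\<lambda>T. 2 * m + 2 * 1 * exp (- T / (4 * m))) \<longlongrightarrow> 2 * m + 2 * 1 * 0) at_top"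
    by (intro tendsto_intros)
  then show ?thesis by simp
qed

lemma region_eq:
  assumes m: "m > 0" and r: "r \<ge> 2 * m + 2 * 1 * exp (- T / (4 * m))"
  shows "Vf m T r = T + rstar m r" and "(r - 2 * m) * exp (T / (4 * m)) \<ge> 1"
proof -
  define E where "E = exp (T / (4 * m))"
  have E: "E > 0" by (simp add: E_def)
  have EE: "exp (- T / (4 * m)) * E = 1" by (simp add: E_def exp_minus field_simps)
  have x: "r - 2 * m \<ge> 2 * exp (- T / (4 * m))" using r by simp
  then have "(r - 2 * m) * E \<ge> 2 * exp (- T / (4 * m)) * E" using E by (intro mult_right_mono) auto
  then have y2: "(r - 2 * m) * E \<ge> 2" using EE by simp
  then show "(r - 2 * m) * exp (T / (4 * m)) \<ge> 1" by (simp add: E_def)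
  have ep: "2 * exp (- T / (4 * m)) > 0" by simp
  have xp: "r - 2 * m > 0" using x ep by linarith
  have gfeq: "gf ((r - 2 * m) * E) = (r - 2 * m) * E" using y2 by (intro gf_eq) simp
  have "Vf m T r = T / 2 + r + 2 * m * ln (((r - 2 * m) * E) / (2 * m))"
    by (simp only: Vf_def E_def[symmetric] gfeq)
  also have "((r - 2 * m) * E) / (2 * m) = (r - 2 * m) / (2 * m) * E" by simp
  finally have "Vf m T r = T / 2 + r + 2 * m * ln ((r - 2 * m) / (2 * m) * E)" .
  also have "ln ((r - 2 * m) / (2 * m) * E) = ln ((r - 2 * m) / (2 * m)) + ln E"
    by (rule ln_mult_pos) (use xp m E in auto)
  also have "ln E = T / (4 * m)" by (simp add: E_def)
  also have "(r - 2 * m) / (2 * m) = r / (2 * m) - 1" using m by (simp add: field_simps)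
  finally have eq: "Vf m T r = T / 2 + r + 2 * m * (ln (r / (2 * m) - 1) + T / (4 * m))" .
  have h: "2 * m * (T / (4 * m)) = T / 2" using m by simp
  show "Vf m T r = T + rstar m r" unfolding eq rstar_def distrib_left h by simp
qed

theorem mainTheorem10:
  fixes m :: real
  assumes "m > 0"
  shows "\<exists>V :: real \<Rightarrow> real \<Rightarrow> real.
    \<comment> \<open>smooth one-parameter family Sigma_T = {v = V T r, r > 0}\<close>
    smooth2 EF_region (case_prod V) \<and>
    (\<forall>T. \<forall>r>0. spacelike_graph m (V T) r) \<and>
    \<comment> \<open>(i) (T,r) \<mapsto> (V T r, r) is a diffeomorphism of R \<times> (0,\<infinity>) onto itself\<close>
    (\<exists>Tf :: real \<Rightarrow> real \<Rightarrow> real. smooth2 EF_region (case_prod Tf) \<and>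
        (\<forall>T. \<forall>r>0. Tf (V T r) r = T) \<and> (\<forall>v. \<forall>r>0. V (Tf v r) r = v)) \<and>
    \<comment> \<open>(ii) S_T = Sigma_T \<inter> {r = 2m} foliate the horizon and are MOTS\<close>
    bij (\<lambda>T. V T (2 * m)) \<and>
    is_MOTS_sphere m (2 * m) \<and>
    \<comment> \<open>(iii)\<close>
    (\<exists>\<delta>0 > 0. let rcut = (\<lambda>T. 2 * m + 2 * \<delta>0 * exp (- T / (4 * m))) in
       (rcut \<longlongrightarrow> 2 * m) at_top \<and>
       (\<forall>T1 T2. T1 < T2 \<longrightarrow> rcut T2 < rcut T1) \<and>
       (\<forall>T. \<forall>r \<ge> rcut T. \<forall>v. (v = V T r) \<longleftrightarrow> (t_Sch m v r = T)) \<and>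
       (\<forall>T. \<forall>r \<ge> rcut T. tangentially_maximal_at m (V T) r))"
proof -
  have m: "m > 0" by (rule assms)
  have A: "smooth2 EF_region (case_prod (Vf m))" by (rule gen2_smooth2[OF gen2_V[OF m]])
  have B: "\<forall>T. \<forall>r>0. spacelike_graph m (Vf m T) r" using spacelike[OF m] by blast
  have C: "\<exists>Tf :: real \<Rightarrow> real \<Rightarrow> real. smooth2 EF_region (case_prod Tf) \<and>
        (\<forall>T. \<forall>r>0. Tf (Vf m T r) r = T) \<and> (\<forall>v. \<forall>r>0. Vf m (Tf v r) r = v)"
    using Tinv_smooth[OF m] Tinv_Vf[OF m] Vf_Tinv[OF m] by blast
  have D: "bij (\<lambda>T. Vf m T (2 * m))"
    unfolding bij_def
  proof
    show "inj (\<lambda>T. Vf m T (2 * m))" by (rule injI) (rule Vf_inj[OF m])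
    show "surj (\<lambda>T. Vf m T (2 * m))" unfolding surj_def using Vf_surj[OF m] by metis
  qed
  have E: "is_MOTS_sphere m (2 * m)"
    using m by (simp add: is_MOTS_sphere_def outgoing_expansion_def lapse_def)
  have F1: "\<forall>T1 T2. T1 < T2 \<longrightarrow> 2 * m + 2 * 1 * exp (- T2 / (4 * m)) < 2 * m + 2 * 1 * exp (- T1 / (4 * m))"
    using m by (auto simp: divide_strict_right_mono)
  have F2: "\<forall>T. \<forall>r \<ge> 2 * m + 2 * 1 * exp (- T / (4 * m)). \<forall>v. (v = Vf m T r) \<longleftrightarrow> (t_Sch m v r = T)"
    using region_eq(1)[OF m] by (auto simp: t_Sch_def)
  have F3: "\<forall>T. \<forall>r \<ge> 2 * m + 2 * 1 * exp (- T / (4 * m)). tangentially_maximal_at m (Vf m T) r"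
  proof (intro allI impI)
    fix T r assume r: "r \<ge> 2 * m + 2 * 1 * exp (- T / (4 * m))"
    define E where "E = exp (T / (4 * m))"
    define y where "y = (r - 2 * m) * E"
    have y1: "y \<ge> 1" using region_eq(2)[OF m r] by (simp add: y_def E_def)
    have ep: "2 * 1 * exp (- T / (4 * m)) > 0" by simp
    have xp: "r - 2 * m > 0" using r ep by linarith
    have E0: "E > 0" by (simp add: E_def)
    have d: "deriv (Vf m T) r = Vr m T r" by (rule DERIV_imp_deriv[OF Vr_deriv[OF m]])
    have gdy: "gd y = 1" using y1 by (simp add: gd_def Phid_def)
    have gfy: "gf y = y" using y1 by (rule gf_eq)
    have "Vr m T r = 1 + 2 * m / (r - 2 * m)"
      unfolding Vr_def Let_def E_def[symmetric] y_def[symmetric] gdy gfy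
      using E0 xp by (simp add: y_def field_simps)
    then show "tangentially_maximal_at m (Vf m T) r"
      unfolding tangentially_maximal_at_def d lapse_def using xp m by (simp add: field_simps)
  qed
  have F: "\<exists>\<delta>0 > 0. let rcut = (\<lambda>T. 2 * m + 2 * \<delta>0 * exp (- T / (4 * m))) in
       (rcut \<longlongrightarrow> 2 * m) at_top \<and>
       (\<forall>T1 T2. T1 < T2 \<longrightarrow> rcut T2 < rcut T1) \<and>
       (\<forall>T. \<forall>r \<ge> rcut T. \<forall>v. (v = Vf m T r) \<longleftrightarrow> (t_Sch m v r = T)) \<and>
       (\<forall>T. \<forall>r \<ge> rcut T. tangentially_maximal_at m (Vf m T) r)"
    apply (rule exI[of _ 1])
    unfolding Let_def using rcut_lim[OF m] F1 F2 F3 by simp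
  show ?thesis
    by (rule exI[of _ "Vf m"]) (use A B C D E F in blast)
qed

end
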